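(* Let $\eta$ be a primitive $7$-th root of unity and let $F(x,y,z)= x^7 + y^7 + z^7 + 14(x^3 y^2 + x^2 z^3 + y^3 z^2 + xyz) + 7(x^5 y + x z^5 + y^5 z + x y^3 + x^3 z + y z^3) + 7( x y^2 z^4 + x^2 y^4 z + x^4 y z^2 + x^2 y^2 z^2)$. Let $G(x,y,z)$ be a real polynomial with $G(\eta x,\eta^2y,\eta^4z)=G(x,y,z)$, $G=1$ on the plane $x+y+z=1$, only non-negative coefficients, and $G(0,0,0)=0$. Then either $G=F$ or $\deg G\ge 10$.
   Context: The invariance condition is equivalent to: every monomial $x^ay^bz^c$ of $G$ satisfies $a+2b+4c\equiv0\pmod 7$. *)

theory Defs
  imports Complex_Main
begin

text \<open>A polynomial in three variables x,y,z with real coefficients is represented by its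
coefficient function: c (a,b,d) is the coefficient of x^a y^b z^d; the support is finite.\<close>

type_synonym poly3 = "nat \<times> nat \<times> nat \<Rightarrow> real"

definition supp3 :: "poly3 \<Rightarrow> (nat \<times> nat \<times> nat) set" where
  "supp3 c = {m. c m \<noteq> 0}"

definition is_poly3 :: "poly3 \<Rightarrow> bool" where
  "is_poly3 c \<longleftrightarrow> finite (supp3 c)"

definition eval3 :: "poly3 \<Rightarrow> 'a::{real_algebra_1,comm_ring_1} \<Rightarrow> 'a \<Rightarrow> 'a \<Rightarrow> 'a" where
  "eval3 c x y z = (\<Sum>(a,b,d)\<in>supp3 c. of_real (c (a,b,d)) * x ^ a * y ^ b * z ^ d)"

text \<open>Total degree (0 for the zero polynomial).\<close>
definition tdeg3 :: "poly3 \<Rightarrow> nat" where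
  "tdeg3 c = Max (insert 0 ((\<lambda>(a,b,d). a + b + d) ` supp3 c))"

definition Fc :: poly3 where
  "Fc m = (if m \<in> {(7,0,0),(0,7,0),(0,0,7)} then 1
     else if m \<in> {(3,2,0),(2,0,3),(0,3,2),(1,1,1)} then 14
     else if m \<in> {(5,1,0),(1,0,5),(0,5,1),(1,3,0),(3,0,1),(0,1,3),
                  (1,2,4),(2,4,1),(4,1,2),(2,2,2)} then 7
     else 0)"

end

theory Submission
  imports Defs
begin

definition Slist :: "(nat \<times> nat \<times> nat) list" where
  "Slist = [(0,0,7), (0,1,3), (0,2,6), (0,3,2), (0,4,5), (0,5,1), (0,7,0), (1,0,5), (1,1,1), (1,2,4), (1,3,0), (1,4,3), (1,6,2), (2,0,3), (2,1,6), (2,2,2), (2,4,1), (2,6,0), (3,0,1), (3,1,4), (3,2,0), (3,3,3), (4,1,2), (4,3,1), (4,5,0), (5,0,4), (5,1,0), (6,0,2), (6,2,1), (7,0,0)]"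

definition Sset :: "(nat \<times> nat \<times> nat) set" where
  "Sset = set Slist"

lemma Slist_eq: "filter (\<lambda>(a,b,d). 0 < a+b+d \<and> a+b+d \<le> 9 \<and> (a + 2*b + 4*d) mod 7 = 0)
   (concat (map (\<lambda>a. concat (map (\<lambda>b. map (\<lambda>d. (a,b,d)) [0..<10]) [0..<10])) [0..<10])) = Slist"
  unfolding Slist_def by code_simp

lemma S_char:
  assumes "a + b + d \<le> 9" "7 dvd (a + 2*b + 4*d)" "(a,b,d) \<noteq> (0,0,0)"
  shows "(a,b,d) \<in> Sset"
proof -
  have "(a,b,d) \<in> set (filter (\<lambda>(a,b,d). 0 < a+b+d \<and> a+b+d \<le> 9 \<and> (a + 2*b + 4*d) mod 7 = 0)
   (concat (map (\<lambda>a. concat (map (\<lambda>b. map (\<lambda>d. (a,b,d)) [0..<10]) [0..<10])) [0..<10])))"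
    using assms by (auto simp: image_iff dvd_eq_mod_eq_0)
  then show ?thesis unfolding Slist_eq Sset_def .
qed

lemma cmod_Re_one: fixes z :: complex assumes "cmod z = 1" "Re z = 1" shows "z = 1"
proof -
  have "(Re z)^2 + (Im z)^2 = 1" using assms(1) by (simp add: cmod_def)
  then have "Im z = 0" using assms(2) by simp
  then show ?thesis using assms(2) by (simp add: complex_eq_iff)
qed

lemma inv_supp:
  fixes \<eta> :: complex and G :: poly3
  assumes e7: "\<eta> ^ 7 = 1" and prim: "\<forall>k::nat. 0 < k \<and> k < 7 \<longrightarrow> \<eta> ^ k \<noteq> 1"
    and fin: "finite (supp3 G)"
    and inv: "eval3 G \<eta> (\<eta>^2) (\<eta>^4) = eval3 G 1 1 1"
    and nn: "\<forall>m. G m \<ge> 0" and mem: "(a,b,d) \<in> supp3 G"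
  shows "7 dvd (a + 2*b + 4*d)"
proof -
  define w where "w = (\<lambda>(a::nat,b::nat,d::nat). a + 2*b + 4*d)"
  have n1: "cmod \<eta> = 1"
  proof -
    have "cmod (\<eta> ^ 7) = 1" using e7 by simp
    then have "cmod \<eta> ^ 7 = 1" by (simp only: norm_power)
    then show ?thesis using power_eq_iff_eq_base[of 7 "cmod \<eta>" 1] by simp
  qed
  have "eval3 G \<eta> (\<eta>^2) (\<eta>^4) = (\<Sum>m\<in>supp3 G. of_real (G m) * \<eta> ^ w m)"
    unfolding eval3_def w_def
    by (rule sum.cong) (auto simp: power_mult[symmetric] power_add mult.assoc)
  moreover have "eval3 G (1::complex) 1 1 = (\<Sum>m\<in>supp3 G. of_real (G m))"
    unfolding eval3_def by (rule sum.cong) auto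
  ultimately have "Re (\<Sum>m\<in>supp3 G. of_real (G m) * \<eta> ^ w m) = Re (\<Sum>m\<in>supp3 G. of_real (G m))"
    using inv by simp
  then have "(\<Sum>m\<in>supp3 G. G m * Re (\<eta> ^ w m)) = (\<Sum>m\<in>supp3 G. G m)"
    by (simp add: Re_sum)
  then have s0: "(\<Sum>m\<in>supp3 G. G m * (1 - Re (\<eta> ^ w m))) = 0"
    by (simp add: algebra_simps sum_subtractf)
  have nnt: "0 \<le> G m * (1 - Re (\<eta> ^ w m))" if "m \<in> supp3 G" for m
  proof -
    have "Re (\<eta> ^ w m) \<le> cmod (\<eta> ^ w m)" by (rule complex_Re_le_cmod)
    also have "\<dots> = 1" by (simp add: norm_power n1)
    finally show "0 \<le> G m * (1 - Re (\<eta> ^ w m))" using nn[rule_format, of m] by (simp add: mult_nonneg_nonneg)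
  qed
  have all0: "\<forall>x\<in>supp3 G. G x * (1 - Re (\<eta> ^ w x)) = 0"
    by (rule iffD1[OF sum_nonneg_eq_0_iff[OF fin nnt] s0])
  have "G (a,b,d) * (1 - Re (\<eta> ^ w (a,b,d))) = 0" by (rule bspec[OF all0 mem])
  moreover have "G (a,b,d) \<noteq> 0" using mem by (simp add: supp3_def)
  ultimately have "Re (\<eta> ^ w (a,b,d)) = 1" by simp
  moreover have "cmod (\<eta> ^ w (a,b,d)) = 1" by (simp add: norm_power n1)
  ultimately have p1: "\<eta> ^ (a + 2*b + 4*d) = 1" using cmod_Re_one unfolding w_def by auto
  let ?n = "a + 2*b + 4*d"
  have "\<eta> ^ ?n = \<eta> ^ (7 * (?n div 7) + ?n mod 7)" by (simp only: mult_div_mod_eq)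
  also have "\<dots> = (\<eta>^7) ^ (?n div 7) * \<eta> ^ (?n mod 7)" by (simp only: power_add power_mult)
  finally have "\<eta> ^ (?n mod 7) = 1" using p1 e7 by simp
  then have "?n mod 7 = 0"
  proof (rule contrapos_pp)
    assume "?n mod 7 \<noteq> 0"
    moreover have "?n mod 7 < 7" by simp
    ultimately show "\<eta> ^ (?n mod 7) \<noteq> 1" using prim by blast
  qed
  then show ?thesis by (simp add: dvd_eq_mod_eq_0)
qed

lemma Fc_supp: "Fc m \<noteq> 0 \<Longrightarrow> m \<in> Sset"
  unfolding Fc_def Sset_def Slist_def by (auto split: if_splits)

theorem lemma5p1:
  fixes \<eta> :: complex and G :: poly3
  assumes eta_prim: "\<eta> ^ 7 = 1" "\<forall>k::nat. 0 < k \<and> k < 7 \<longrightarrow> \<eta> ^ k \<noteq> 1"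
    and G_poly: "is_poly3 G"
    and G_inv: "\<forall>x y z :: complex. eval3 G (\<eta> * x) (\<eta>^2 * y) (\<eta>^4 * z) = eval3 G x y z"
    and G_plane: "\<forall>x y z :: real. x + y + z = 1 \<longrightarrow> eval3 G x y z = 1"
    and G_nonneg: "\<forall>m. G m \<ge> 0"
    and G_zero: "eval3 G (0::real) 0 0 = 0"
  shows "G = Fc \<or> tdeg3 G \<ge> 10"
proof (rule disjCI)
  assume ndeg: "\<not> tdeg3 G \<ge> 10"
  have fin: "finite (supp3 G)" using G_poly by (simp add: is_poly3_def)
  have deg: "a + b + d \<le> 9" if "(a,b,d) \<in> supp3 G" for a b d
  proof -
    have "a + b + d \<le> tdeg3 G" unfolding tdeg3_def
      by (rule Max_ge) (use fin that in \<open>force+\<close>)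
    then show ?thesis using ndeg by simp
  qed
  have "eval3 G (0::real) 0 0 = (\<Sum>m\<in>supp3 G. if m = (0,0,0) then G m else 0)"
    unfolding eval3_def by (rule sum.cong) (auto simp: power_0_left split: if_splits)
  then have G0: "G (0,0,0) = 0" using G_zero fin by (auto simp: supp3_def split: if_splits)
  have inv1: "eval3 G \<eta> (\<eta>^2) (\<eta>^4) = eval3 G 1 1 1"
    using G_inv[rule_format, of 1 1 1] by simp
  have sub: "supp3 G \<subseteq> Sset"
  proof
    fix m assume m: "m \<in> supp3 G"
    obtain a b d where abd: "m = (a,b,d)" by (cases m) auto
    show "m \<in> Sset" unfolding abd
    proof (rule S_char)
      show "a + b + d \<le> 9" using deg m abd by simp
      show "7 dvd (a + 2*b + 4*d)" using inv_supp[OF eta_prim fin inv1 G_nonneg] m abd by simp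
      show "(a,b,d) \<noteq> (0,0,0)"
      proof
        assume "(a,b,d) = (0,0,0)"
        then show False using G0 m abd by (simp add: supp3_def)
      qed
    qed
  qed
  define P where "P x y z = (\<Sum>(a,b,d)\<in>Sset. G (a,b,d) * x^a * y^b * z^d)" for x y z :: real
  have red: "eval3 G x y z = P x y z" for x y z :: real
  proof -
  have "eval3 G x y z = (\<Sum>(a,b,d)\<in>supp3 G. G (a,b,d) * x^a * y^b * z^d)"
    unfolding eval3_def by simp
  also have "\<dots> = P x y z" unfolding P_def
  proof (rule sum.mono_neutral_left)
    show "finite Sset" by (simp add: Sset_def)
    show "supp3 G \<subseteq> Sset" by (rule sub)
    show "\<forall>i\<in>Sset - supp3 G. (case i of (a, b, d) \<Rightarrow> G (a, b, d) * x ^ a * y ^ b * z ^ d) = 0"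
      by (auto simp: supp3_def)
  qed
  finally show ?thesis .
  qed
  have plane: "\<forall>x y z :: real. x + y + z = 1 \<longrightarrow> P x y z = 1" using G_plane red by simp
  have Pexp: "P x y z = G (0,0,7) * x^0 * y^0 * z^7 + G (0,1,3) * x^0 * y^1 * z^3 + G (0,2,6) * x^0 * y^2 * z^6 + G (0,3,2) * x^0 * y^3 * z^2 + G (0,4,5) * x^0 * y^4 * z^5 + G (0,5,1) * x^0 * y^5 * z^1 + G (0,7,0) * x^0 * y^7 * z^0 + G (1,0,5) * x^1 * y^0 * z^5 + G (1,1,1) * x^1 * y^1 * z^1 + G (1,2,4) * x^1 * y^2 * z^4 + G (1,3,0) * x^1 * y^3 * z^0 + G (1,4,3) * x^1 * y^4 * z^3 + G (1,6,2) * x^1 * y^6 * z^2 + G (2,0,3) * x^2 * y^0 * z^3 + G (2,1,6) * x^2 * y^1 * z^6 + G (2,2,2) * x^2 * y^2 * z^2 + G (2,4,1) * x^2 * y^4 * z^1 + G (2,6,0) * x^2 * y^6 * z^0 + G (3,0,1) * x^3 * y^0 * z^1 + G (3,1,4) * x^3 * y^1 * z^4 + G (3,2,0) * x^3 * y^2 * z^0 + G (3,3,3) * x^3 * y^3 * z^3 + G (4,1,2) * x^4 * y^1 * z^2 + G (4,3,1) * x^4 * y^3 * z^1 + G (4,5,0) * x^4 * y^5 * z^0 + G (5,0,4) * x^5 * y^0 * z^4 + G (5,1,0) * x^5 * y^1 * z^0 + G (6,0,2) * x^6 * y^0 * z^2 + G (6,2,1) * x^6 * y^2 * z^1 + G (7,0,0)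 * x^7 * y^0 * z^0" for x y z :: real
    unfolding P_def Sset_def Slist_def by simp
  have q1: "(1) * G (7,0,0) = 1" using plane[rule_format, of "1" "0" "0"] by (simp add: Pexp)
  have v29: "G (7,0,0) = 1" using q1 by simp
  have q2: "(1) * G (0,7,0) = 1" using plane[rule_format, of "0" "1" "0"] by (simp add: Pexp)
  have v6: "G (0,7,0) = 1" using q2 by simp
  have q3: "(1) * G (0,0,7) = 1" using plane[rule_format, of "0" "0" "1"] by (simp add: Pexp)
  have v0: "G (0,0,7) = 1" using q3 by simp
  have q4: "(128) * G (0,7,0) + (-8) * G (1,3,0) + (64) * G (2,6,0) + (-4) * G (3,2,0) + (32) * G (4,5,0) + (-2) * G (5,1,0) + (-1) * G (7,0,0) = 1" using plane[rule_format, of "(-1)" "2" "0"] by (simp add: Pexp)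
  have q5: "(-1) * G (0,7,0) + (-2) * G (1,3,0) + (4) * G (2,6,0) + (8) * G (3,2,0) + (-16) * G (4,5,0) + (-32) * G (5,1,0) + (128) * G (7,0,0) = 1" using plane[rule_format, of "2" "(-1)" "0"] by (simp add: Pexp)
  have q6: "(2187) * G (0,7,0) + (-54) * G (1,3,0) + (2916) * G (2,6,0) + (-72) * G (3,2,0) + (3888) * G (4,5,0) + (-96) * G (5,1,0) + (-128) * G (7,0,0) = 1" using plane[rule_format, of "(-2)" "3" "0"] by (simp add: Pexp)
  have q7: "(-128) * G (0,7,0) + (-24) * G (1,3,0) + (576) * G (2,6,0) + (108) * G (3,2,0) + (-2592) * G (4,5,0) + (-486) * G (5,1,0) + (2187) * G (7,0,0) = 1" using plane[rule_format, of "3" "(-2)" "0"] by (simp add: Pexp)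
  have q8: "(16384) * G (0,7,0) + (-192) * G (1,3,0) + (36864) * G (2,6,0) + (-432) * G (3,2,0) + (82944) * G (4,5,0) + (-972) * G (5,1,0) + (-2187) * G (7,0,0) = 1" using plane[rule_format, of "(-3)" "4" "0"] by (simp add: Pexp)
  have q9: "(-4) * G (1,3,0) + (32) * G (2,6,0) + (-2) * G (3,2,0) + (16) * G (4,5,0) + (-1) * G (5,1,0) = -63" using q4 v6 v29 by linarith
  have q10: "(-1) * G (1,3,0) + (2) * G (2,6,0) + (4) * G (3,2,0) + (-8) * G (4,5,0) + (-16) * G (5,1,0) = -63" using q5 v6 v29 by linarith
  have q11: "(-9) * G (1,3,0) + (486) * G (2,6,0) + (-12) * G (3,2,0) + (648) * G (4,5,0) + (-16) * G (5,1,0) = -343" using q6 v6 v29 by linarith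
  have q12: "(-4) * G (1,3,0) + (96) * G (2,6,0) + (18) * G (3,2,0) + (-432) * G (4,5,0) + (-81) * G (5,1,0) = -343" using q7 v6 v29 by linarith
  have q13: "(-16) * G (1,3,0) + (3072) * G (2,6,0) + (-36) * G (3,2,0) + (6912) * G (4,5,0) + (-81) * G (5,1,0) = -1183" using q8 v6 v29 by linarith
  have q14: "(-8) * G (2,6,0) + (6) * G (3,2,0) + (-16) * G (4,5,0) + (-21) * G (5,1,0) = -63" using q9 q10 by linarith
  have q15: "(-117) * G (2,6,0) + (12) * G (3,2,0) + (-180) * G (4,5,0) + (-32) * G (5,1,0) = -56" using q11 q10 by linarith
  have q16: "(-88) * G (2,6,0) + (-2) * G (3,2,0) + (400) * G (4,5,0) + (17) * G (5,1,0) = 91" using q12 q10 by linarith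
  have q17: "(-608) * G (2,6,0) + (20) * G (3,2,0) + (-1408) * G (4,5,0) + (-35) * G (5,1,0) = 35" using q13 q10 by linarith
  have q18: "(4) * G (1,3,0) + (-22) * G (3,2,0) + (48) * G (4,5,0) + (85) * G (5,1,0) = 315" using q10 q14 by linarith
  have q19: "(606) * G (3,2,0) + (-432) * G (4,5,0) + (-2201) * G (5,1,0) = -6923" using q15 q14 by linarith
  have q20: "(17) * G (3,2,0) + (-144) * G (4,5,0) + (-62) * G (5,1,0) = -196" using q16 q14 by linarith
  have q21: "(436) * G (3,2,0) + (192) * G (4,5,0) + (-1561) * G (5,1,0) = -4823" using q17 q14 by linarith
  have q22: "(-136) * G (2,6,0) + (592) * G (4,5,0) + (15) * G (5,1,0) = 105" using q14 q20 by linarith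
  have q23: "(68) * G (1,3,0) + (-2352) * G (4,5,0) + (81) * G (5,1,0) = 1043" using q18 q20 by linarith
  have q24: "(15984) * G (4,5,0) + (31) * G (5,1,0) = 217" using q19 q20 by linarith
  have q25: "(22016) * G (4,5,0) + (165) * G (5,1,0) = 1155" using q21 q20 by linarith
  have q26: "(-108) * G (2,6,0) + (11) * G (5,1,0) = 77" using q22 q24 by linarith
  have q27: "(333) * G (1,3,0) + (419) * G (5,1,0) = 5264" using q23 q24 by linarith
  have q28: "(111) * G (3,2,0) + (-403) * G (5,1,0) = -1267" using q20 q24 by linarith
  have q29: "(1) * G (5,1,0) = 7" using q25 q24 by linarith
  have q30: "(-1) * G (2,6,0) = 0" using q26 q29 by linarith
  have q31: "(1) * G (1,3,0) = 7" using q27 q29 by linarith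
  have q32: "(1) * G (4,5,0) = 0" using q24 q29 by linarith
  have q33: "(1) * G (3,2,0) = 14" using q28 q29 by linarith
  have v17: "G (2,6,0) = 0" using q30 by simp
  have v10: "G (1,3,0) = 7" using q31 by simp
  have v24: "G (4,5,0) = 0" using q32 by simp
  have v20: "G (3,2,0) = 14" using q33 by simp
  have v26: "G (5,1,0) = 7" using q29 by simp
  have q34: "(128) * G (0,0,7) + (-8) * G (0,1,3) + (64) * G (0,2,6) + (-4) * G (0,3,2) + (32) * G (0,4,5) + (-2) * G (0,5,1) + (-1) * G (0,7,0) = 1" using plane[rule_format, of "0" "(-1)" "2"] by (simp add: Pexp)
  have q35: "(-1) * G (0,0,7) + (-2) * G (0,1,3) + (4) * G (0,2,6) + (8) * G (0,3,2) + (-16) * G (0,4,5) + (-32) * G (0,5,1) + (128) * G (0,7,0) = 1" using plane[rule_format, of "0" "2" "(-1)"] by (simp add: Pexp)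
  have q36: "(2187) * G (0,0,7) + (-54) * G (0,1,3) + (2916) * G (0,2,6) + (-72) * G (0,3,2) + (3888) * G (0,4,5) + (-96) * G (0,5,1) + (-128) * G (0,7,0) = 1" using plane[rule_format, of "0" "(-2)" "3"] by (simp add: Pexp)
  have q37: "(-128) * G (0,0,7) + (-24) * G (0,1,3) + (576) * G (0,2,6) + (108) * G (0,3,2) + (-2592) * G (0,4,5) + (-486) * G (0,5,1) + (2187) * G (0,7,0) = 1" using plane[rule_format, of "0" "3" "(-2)"] by (simp add: Pexp)
  have q38: "(16384) * G (0,0,7) + (-192) * G (0,1,3) + (36864) * G (0,2,6) + (-432) * G (0,3,2) + (82944) * G (0,4,5) + (-972) * G (0,5,1) + (-2187) * G (0,7,0) = 1" using plane[rule_format, of "0" "(-3)" "4"] by (simp add: Pexp)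
  have q39: "(-4) * G (0,1,3) + (32) * G (0,2,6) + (-2) * G (0,3,2) + (16) * G (0,4,5) + (-1) * G (0,5,1) = -63" using q34 v0 v6 by linarith
  have q40: "(-1) * G (0,1,3) + (2) * G (0,2,6) + (4) * G (0,3,2) + (-8) * G (0,4,5) + (-16) * G (0,5,1) = -63" using q35 v0 v6 by linarith
  have q41: "(-9) * G (0,1,3) + (486) * G (0,2,6) + (-12) * G (0,3,2) + (648) * G (0,4,5) + (-16) * G (0,5,1) = -343" using q36 v0 v6 by linarith
  have q42: "(-4) * G (0,1,3) + (96) * G (0,2,6) + (18) * G (0,3,2) + (-432) * G (0,4,5) + (-81) * G (0,5,1) = -343" using q37 v0 v6 by linarith
  have q43: "(-16) * G (0,1,3) + (3072) * G (0,2,6) + (-36) * G (0,3,2) + (6912) * G (0,4,5) + (-81) * G (0,5,1) = -1183" using q38 v0 v6 by linarith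
  have q44: "(-8) * G (0,2,6) + (6) * G (0,3,2) + (-16) * G (0,4,5) + (-21) * G (0,5,1) = -63" using q39 q40 by linarith
  have q45: "(-117) * G (0,2,6) + (12) * G (0,3,2) + (-180) * G (0,4,5) + (-32) * G (0,5,1) = -56" using q41 q40 by linarith
  have q46: "(-88) * G (0,2,6) + (-2) * G (0,3,2) + (400) * G (0,4,5) + (17) * G (0,5,1) = 91" using q42 q40 by linarith
  have q47: "(-608) * G (0,2,6) + (20) * G (0,3,2) + (-1408) * G (0,4,5) + (-35) * G (0,5,1) = 35" using q43 q40 by linarith
  have q48: "(4) * G (0,1,3) + (-22) * G (0,3,2) + (48) * G (0,4,5) + (85) * G (0,5,1) = 315" using q40 q44 by linarith
  have q49: "(606) * G (0,3,2) + (-432) * G (0,4,5) + (-2201) * G (0,5,1) = -6923" using q45 q44 by linarith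
  have q50: "(17) * G (0,3,2) + (-144) * G (0,4,5) + (-62) * G (0,5,1) = -196" using q46 q44 by linarith
  have q51: "(436) * G (0,3,2) + (192) * G (0,4,5) + (-1561) * G (0,5,1) = -4823" using q47 q44 by linarith
  have q52: "(-136) * G (0,2,6) + (592) * G (0,4,5) + (15) * G (0,5,1) = 105" using q44 q50 by linarith
  have q53: "(68) * G (0,1,3) + (-2352) * G (0,4,5) + (81) * G (0,5,1) = 1043" using q48 q50 by linarith
  have q54: "(15984) * G (0,4,5) + (31) * G (0,5,1) = 217" using q49 q50 by linarith
  have q55: "(22016) * G (0,4,5) + (165) * G (0,5,1) = 1155" using q51 q50 by linarith
  have q56: "(-108) * G (0,2,6) + (11) * G (0,5,1) = 77" using q52 q54 by linarith
  have q57: "(333) * G (0,1,3) + (419) * G (0,5,1) = 5264" using q53 q54 by linarith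
  have q58: "(111) * G (0,3,2) + (-403) * G (0,5,1) = -1267" using q50 q54 by linarith
  have q59: "(1) * G (0,5,1) = 7" using q55 q54 by linarith
  have q60: "(-1) * G (0,2,6) = 0" using q56 q59 by linarith
  have q61: "(1) * G (0,1,3) = 7" using q57 q59 by linarith
  have q62: "(1) * G (0,4,5) = 0" using q54 q59 by linarith
  have q63: "(1) * G (0,3,2) = 14" using q58 q59 by linarith
  have v2: "G (0,2,6) = 0" using q60 by simp
  have v1: "G (0,1,3) = 7" using q61 by simp
  have v4: "G (0,4,5) = 0" using q62 by simp
  have v3: "G (0,3,2) = 14" using q63 by simp
  have v5: "G (0,5,1) = 7" using q59 by simp
  have q64: "(-1) * G (0,0,7) + (-2) * G (1,0,5) + (-4) * G (2,0,3) + (-8) * G (3,0,1) + (32) * G (5,0,4) + (64) * G (6,0,2) + (128) * G (7,0,0) = 1" using plane[rule_format, of "2" "0" "(-1)"] by (simp add: Pexp)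
  have q65: "(128) * G (0,0,7) + (-32) * G (1,0,5) + (8) * G (2,0,3) + (-2) * G (3,0,1) + (-16) * G (5,0,4) + (4) * G (6,0,2) + (-1) * G (7,0,0) = 1" using plane[rule_format, of "(-1)" "0" "2"] by (simp add: Pexp)
  have q66: "(-128) * G (0,0,7) + (-96) * G (1,0,5) + (-72) * G (2,0,3) + (-54) * G (3,0,1) + (3888) * G (5,0,4) + (2916) * G (6,0,2) + (2187) * G (7,0,0) = 1" using plane[rule_format, of "3" "0" "(-2)"] by (simp add: Pexp)
  have q67: "(2187) * G (0,0,7) + (-486) * G (1,0,5) + (108) * G (2,0,3) + (-24) * G (3,0,1) + (-2592) * G (5,0,4) + (576) * G (6,0,2) + (-128) * G (7,0,0) = 1" using plane[rule_format, of "(-2)" "0" "3"] by (simp add: Pexp)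
  have q68: "(-2187) * G (0,0,7) + (-972) * G (1,0,5) + (-432) * G (2,0,3) + (-192) * G (3,0,1) + (82944) * G (5,0,4) + (36864) * G (6,0,2) + (16384) * G (7,0,0) = 1" using plane[rule_format, of "4" "0" "(-3)"] by (simp add: Pexp)
  have q69: "(-1) * G (1,0,5) + (-2) * G (2,0,3) + (-4) * G (3,0,1) + (16) * G (5,0,4) + (32) * G (6,0,2) = -63" using q64 v0 v29 by linarith
  have q70: "(-16) * G (1,0,5) + (4) * G (2,0,3) + (-1) * G (3,0,1) + (-8) * G (5,0,4) + (2) * G (6,0,2) = -63" using q65 v0 v29 by linarith
  have q71: "(-16) * G (1,0,5) + (-12) * G (2,0,3) + (-9) * G (3,0,1) + (648) * G (5,0,4) + (486) * G (6,0,2) = -343" using q66 v0 v29 by linarith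
  have q72: "(-81) * G (1,0,5) + (18) * G (2,0,3) + (-4) * G (3,0,1) + (-432) * G (5,0,4) + (96) * G (6,0,2) = -343" using q67 v0 v29 by linarith
  have q73: "(-81) * G (1,0,5) + (-36) * G (2,0,3) + (-16) * G (3,0,1) + (6912) * G (5,0,4) + (3072) * G (6,0,2) = -1183" using q68 v0 v29 by linarith
  have q74: "(-12) * G (2,0,3) + (-21) * G (3,0,1) + (88) * G (5,0,4) + (170) * G (6,0,2) = -315" using q70 q69 by linarith
  have q75: "(-20) * G (2,0,3) + (-55) * G (3,0,1) + (-392) * G (5,0,4) + (26) * G (6,0,2) = -665" using q71 q69 by linarith
  have q76: "(-45) * G (2,0,3) + (-80) * G (3,0,1) + (432) * G (5,0,4) + (624) * G (6,0,2) = -1190" using q72 q69 by linarith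
  have q77: "(-63) * G (2,0,3) + (-154) * G (3,0,1) + (-2808) * G (5,0,4) + (-240) * G (6,0,2) = -1960" using q73 q69 by linarith
  have q78: "(6) * G (1,0,5) + (3) * G (3,0,1) + (-8) * G (5,0,4) + (-22) * G (6,0,2) = 63" using q69 q74 by linarith
  have q79: "(15) * G (3,0,1) + (404) * G (5,0,4) + (193) * G (6,0,2) = 105" using q75 q74 by linarith
  have q80: "(5) * G (3,0,1) + (-408) * G (5,0,4) + (54) * G (6,0,2) = 35" using q76 q74 by linarith
  have q81: "(35) * G (3,0,1) + (2616) * G (5,0,4) + (906) * G (6,0,2) = 245" using q77 q74 by linarith
  have q82: "(15) * G (1,0,5) + (592) * G (5,0,4) + (-136) * G (6,0,2) = 105" using q78 q80 by linarith
  have q83: "(-15) * G (2,0,3) + (-2032) * G (5,0,4) + (496) * G (6,0,2) = -210" using q74 q80 by linarith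
  have q84: "(1628) * G (5,0,4) + (31) * G (6,0,2) = 0" using q79 q80 by linarith
  have q85: "(114) * G (5,0,4) + (11) * G (6,0,2) = 0" using q81 q80 by linarith
  have q86: "(855) * G (1,0,5) + (-11008) * G (6,0,2) = 5985" using q82 q85 by linarith
  have q87: "(-855) * G (2,0,3) + (39448) * G (6,0,2) = -11970" using q83 q85 by linarith
  have q88: "(-1) * G (6,0,2) = 0" using q84 q85 by linarith
  have q89: "(95) * G (3,0,1) + (1774) * G (6,0,2) = 665" using q80 q85 by linarith
  have q90: "(-1) * G (1,0,5) = -7" using q86 q88 by linarith
  have q91: "(1) * G (2,0,3) = 14" using q87 q88 by linarith
  have q92: "(-1) * G (3,0,1) = -7" using q89 q88 by linarith
  have q93: "(-1) * G (5,0,4) = 0" using q85 q88 by linarith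
  have v7: "G (1,0,5) = 7" using q90 by simp
  have v13: "G (2,0,3) = 14" using q91 by simp
  have v27: "G (6,0,2) = 0" using q88 by simp
  have v18: "G (3,0,1) = 7" using q92 by simp
  have v25: "G (5,0,4) = 0" using q93 by simp
  have q94: "(1) * G (0,0,7) + (1) * G (0,1,3) + (1) * G (0,2,6) + (1) * G (0,3,2) + (1) * G (0,4,5) + (1) * G (0,5,1) + (1) * G (0,7,0) + (-1) * G (1,0,5) + (-1) * G (1,1,1) + (-1) * G (1,2,4) + (-1) * G (1,3,0) + (-1) * G (1,4,3) + (-1) * G (1,6,2) + (1) * G (2,0,3) + (1) * G (2,1,6) + (1) * G (2,2,2) + (1) * G (2,4,1) + (1) * G (2,6,0) + (-1) * G (3,0,1) + (-1) * G (3,1,4) + (-1) * G (3,2,0) + (-1) * G (3,3,3) + (1) * G (4,1,2) + (1) * G (4,3,1) + (1) * G (4,5,0) + (-1) * G (5,0,4) + (-1) * G (5,1,0) + (1) * G (6,0,2) + (1) * G (6,2,1) + (-1) * G (7,0,0) = 1" using plane[rule_format, of "(-1)" "1" "1"] by (simp add: Pexp)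
  have q95: "(1) * G (0,0,7) + (-1) * G (0,1,3) + (1) * G (0,2,6) + (-1) * G (0,3,2) + (1) * G (0,4,5) + (-1) * G (0,5,1) + (-1) * G (0,7,0) + (1) * G (1,0,5) + (-1) * G (1,1,1) + (1) * G (1,2,4) + (-1) * G (1,3,0) + (1) * G (1,4,3) + (1) * G (1,6,2) + (1) * G (2,0,3) + (-1) * G (2,1,6) + (1) * G (2,2,2) + (1) * G (2,4,1) + (1) * G (2,6,0) + (1) * G (3,0,1) + (-1) * G (3,1,4) + (1) * G (3,2,0) + (-1) * G (3,3,3) + (-1) * G (4,1,2) + (-1) * G (4,3,1) + (-1) * G (4,5,0) + (1) * G (5,0,4) + (-1) * G (5,1,0) + (1) * G (6,0,2) + (1) * G (6,2,1) + (1) * G (7,0,0) = 1" using plane[rule_format, of "1" "(-1)" "1"] by (simp add: Pexp)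
  have q96: "(-1) * G (0,0,7) + (-1) * G (0,1,3) + (1) * G (0,2,6) + (1) * G (0,3,2) + (-1) * G (0,4,5) + (-1) * G (0,5,1) + (1) * G (0,7,0) + (-1) * G (1,0,5) + (-1) * G (1,1,1) + (1) * G (1,2,4) + (1) * G (1,3,0) + (-1) * G (1,4,3) + (1) * G (1,6,2) + (-1) * G (2,0,3) + (1) * G (2,1,6) + (1) * G (2,2,2) + (-1) * G (2,4,1) + (1) * G (2,6,0) + (-1) * G (3,0,1) + (1) * G (3,1,4) + (1) * G (3,2,0) + (-1) * G (3,3,3) + (1) * G (4,1,2) + (-1) * G (4,3,1) + (1) * G (4,5,0) + (1) * G (5,0,4) + (1) * G (5,1,0) + (1) * G (6,0,2) + (-1) * G (6,2,1) + (1) * G (7,0,0) = 1" using plane[rule_format, of "1" "1" "(-1)"] by (simp add: Pexp)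
  have q97: "(128) * G (0,0,7) + (8) * G (0,1,3) + (64) * G (0,2,6) + (4) * G (0,3,2) + (32) * G (0,4,5) + (2) * G (0,5,1) + (1) * G (0,7,0) + (-64) * G (1,0,5) + (-4) * G (1,1,1) + (-32) * G (1,2,4) + (-2) * G (1,3,0) + (-16) * G (1,4,3) + (-8) * G (1,6,2) + (32) * G (2,0,3) + (256) * G (2,1,6) + (16) * G (2,2,2) + (8) * G (2,4,1) + (4) * G (2,6,0) + (-16) * G (3,0,1) + (-128) * G (3,1,4) + (-8) * G (3,2,0) + (-64) * G (3,3,3) + (64) * G (4,1,2) + (32) * G (4,3,1) + (16) * G (4,5,0) + (-512) * G (5,0,4) + (-32) * G (5,1,0) + (256) * G (6,0,2) + (128) * G (6,2,1) + (-128) * G (7,0,0) = 1" using plane[rule_format, of "(-2)" "1" "2"] by (simp add: Pexp)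
  have q98: "(1) * G (0,0,7) + (2) * G (0,1,3) + (4) * G (0,2,6) + (8) * G (0,3,2) + (16) * G (0,4,5) + (32) * G (0,5,1) + (128) * G (0,7,0) + (-2) * G (1,0,5) + (-4) * G (1,1,1) + (-8) * G (1,2,4) + (-16) * G (1,3,0) + (-32) * G (1,4,3) + (-128) * G (1,6,2) + (4) * G (2,0,3) + (8) * G (2,1,6) + (16) * G (2,2,2) + (64) * G (2,4,1) + (256) * G (2,6,0) + (-8) * G (3,0,1) + (-16) * G (3,1,4) + (-32) * G (3,2,0) + (-64) * G (3,3,3) + (32) * G (4,1,2) + (128) * G (4,3,1) + (512) * G (4,5,0) + (-32) * G (5,0,4) + (-64) * G (5,1,0) + (64) * G (6,0,2) + (256) * G (6,2,1) + (-128) * G (7,0,0) = 1" using plane[rule_format, of "(-2)" "2" "1"] by (simp add: Pexp)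
  have q99: "(128) * G (0,0,7) + (-16) * G (0,1,3) + (256) * G (0,2,6) + (-32) * G (0,3,2) + (512) * G (0,4,5) + (-64) * G (0,5,1) + (-128) * G (0,7,0) + (32) * G (1,0,5) + (-4) * G (1,1,1) + (64) * G (1,2,4) + (-8) * G (1,3,0) + (128) * G (1,4,3) + (256) * G (1,6,2) + (8) * G (2,0,3) + (-128) * G (2,1,6) + (16) * G (2,2,2) + (32) * G (2,4,1) + (64) * G (2,6,0) + (2) * G (3,0,1) + (-32) * G (3,1,4) + (4) * G (3,2,0) + (-64) * G (3,3,3) + (-8) * G (4,1,2) + (-16) * G (4,3,1) + (-32) * G (4,5,0) + (16) * G (5,0,4) + (-2) * G (5,1,0) + (4) * G (6,0,2) + (8) * G (6,2,1) + (1) * G (7,0,0) = 1" using plane[rule_format, of "1" "(-2)" "2"] by (simp add: Pexp)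
  have q100: "(-128) * G (0,0,7) + (-16) * G (0,1,3) + (256) * G (0,2,6) + (32) * G (0,3,2) + (-512) * G (0,4,5) + (-64) * G (0,5,1) + (128) * G (0,7,0) + (-32) * G (1,0,5) + (-4) * G (1,1,1) + (64) * G (1,2,4) + (8) * G (1,3,0) + (-128) * G (1,4,3) + (256) * G (1,6,2) + (-8) * G (2,0,3) + (128) * G (2,1,6) + (16) * G (2,2,2) + (-32) * G (2,4,1) + (64) * G (2,6,0) + (-2) * G (3,0,1) + (32) * G (3,1,4) + (4) * G (3,2,0) + (-64) * G (3,3,3) + (8) * G (4,1,2) + (-16) * G (4,3,1) + (32) * G (4,5,0) + (16) * G (5,0,4) + (2) * G (5,1,0) + (4) * G (6,0,2) + (-8) * G (6,2,1) + (1) * G (7,0,0) = 1" using plane[rule_format, of "1" "2" "(-2)"] by (simp add: Pexp)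
  have q101: "(1) * G (0,0,7) + (-2) * G (0,1,3) + (4) * G (0,2,6) + (-8) * G (0,3,2) + (16) * G (0,4,5) + (-32) * G (0,5,1) + (-128) * G (0,7,0) + (2) * G (1,0,5) + (-4) * G (1,1,1) + (8) * G (1,2,4) + (-16) * G (1,3,0) + (32) * G (1,4,3) + (128) * G (1,6,2) + (4) * G (2,0,3) + (-8) * G (2,1,6) + (16) * G (2,2,2) + (64) * G (2,4,1) + (256) * G (2,6,0) + (8) * G (3,0,1) + (-16) * G (3,1,4) + (32) * G (3,2,0) + (-64) * G (3,3,3) + (-32) * G (4,1,2) + (-128) * G (4,3,1) + (-512) * G (4,5,0) + (32) * G (5,0,4) + (-64) * G (5,1,0) + (64) * G (6,0,2) + (256) * G (6,2,1) + (128) * G (7,0,0) = 1" using plane[rule_format, of "2" "(-2)" "1"] by (simp add: Pexp)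
  have q102: "(-128) * G (0,0,7) + (-8) * G (0,1,3) + (64) * G (0,2,6) + (4) * G (0,3,2) + (-32) * G (0,4,5) + (-2) * G (0,5,1) + (1) * G (0,7,0) + (-64) * G (1,0,5) + (-4) * G (1,1,1) + (32) * G (1,2,4) + (2) * G (1,3,0) + (-16) * G (1,4,3) + (8) * G (1,6,2) + (-32) * G (2,0,3) + (256) * G (2,1,6) + (16) * G (2,2,2) + (-8) * G (2,4,1) + (4) * G (2,6,0) + (-16) * G (3,0,1) + (128) * G (3,1,4) + (8) * G (3,2,0) + (-64) * G (3,3,3) + (64) * G (4,1,2) + (-32) * G (4,3,1) + (16) * G (4,5,0) + (512) * G (5,0,4) + (32) * G (5,1,0) + (256) * G (6,0,2) + (-128) * G (6,2,1) + (128) * G (7,0,0) = 1" using plane[rule_format, of "2" "1" "(-2)"] by (simp add: Pexp)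
  have q103: "(2187) * G (0,0,7) + (-27) * G (0,1,3) + (729) * G (0,2,6) + (-9) * G (0,3,2) + (243) * G (0,4,5) + (-3) * G (0,5,1) + (-1) * G (0,7,0) + (-243) * G (1,0,5) + (3) * G (1,1,1) + (-81) * G (1,2,4) + (1) * G (1,3,0) + (-27) * G (1,4,3) + (-9) * G (1,6,2) + (27) * G (2,0,3) + (-729) * G (2,1,6) + (9) * G (2,2,2) + (3) * G (2,4,1) + (1) * G (2,6,0) + (-3) * G (3,0,1) + (81) * G (3,1,4) + (-1) * G (3,2,0) + (27) * G (3,3,3) + (-9) * G (4,1,2) + (-3) * G (4,3,1) + (-1) * G (4,5,0) + (-81) * G (5,0,4) + (1) * G (5,1,0) + (9) * G (6,0,2) + (3) * G (6,2,1) + (-1) * G (7,0,0) = 1" using plane[rule_format, of "(-1)" "(-1)" "3"] by (simp add: Pexp)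
  have q104: "(2187) * G (0,0,7) + (27) * G (0,1,3) + (729) * G (0,2,6) + (9) * G (0,3,2) + (243) * G (0,4,5) + (3) * G (0,5,1) + (1) * G (0,7,0) + (-729) * G (1,0,5) + (-9) * G (1,1,1) + (-243) * G (1,2,4) + (-3) * G (1,3,0) + (-81) * G (1,4,3) + (-27) * G (1,6,2) + (243) * G (2,0,3) + (6561) * G (2,1,6) + (81) * G (2,2,2) + (27) * G (2,4,1) + (9) * G (2,6,0) + (-81) * G (3,0,1) + (-2187) * G (3,1,4) + (-27) * G (3,2,0) + (-729) * G (3,3,3) + (729) * G (4,1,2) + (243) * G (4,3,1) + (81) * G (4,5,0) + (-19683) * G (5,0,4) + (-243) * G (5,1,0) + (6561) * G (6,0,2) + (2187) * G (6,2,1) + (-2187) * G (7,0,0) = 1" using plane[rule_format, of "(-3)" "1" "3"] by (simp add: Pexp)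
  have q105: "(128) * G (0,0,7) + (16) * G (0,1,3) + (256) * G (0,2,6) + (32) * G (0,3,2) + (512) * G (0,4,5) + (64) * G (0,5,1) + (128) * G (0,7,0) + (-96) * G (1,0,5) + (-12) * G (1,1,1) + (-192) * G (1,2,4) + (-24) * G (1,3,0) + (-384) * G (1,4,3) + (-768) * G (1,6,2) + (72) * G (2,0,3) + (1152) * G (2,1,6) + (144) * G (2,2,2) + (288) * G (2,4,1) + (576) * G (2,6,0) + (-54) * G (3,0,1) + (-864) * G (3,1,4) + (-108) * G (3,2,0) + (-1728) * G (3,3,3) + (648) * G (4,1,2) + (1296) * G (4,3,1) + (2592) * G (4,5,0) + (-3888) * G (5,0,4) + (-486) * G (5,1,0) + (2916) * G (6,0,2) + (5832) * G (6,2,1) + (-2187) * G (7,0,0) = 1" using plane[rule_format, of "(-3)" "2" "2"] by (simp add: Pexp)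
  have q106: "(-1) * G (1,1,1) + (-1) * G (1,2,4) + (-1) * G (1,4,3) + (-1) * G (1,6,2) + (1) * G (2,1,6) + (1) * G (2,2,2) + (1) * G (2,4,1) + (-1) * G (3,1,4) + (-1) * G (3,3,3) + (1) * G (4,1,2) + (1) * G (4,3,1) + (1) * G (6,2,1) = 0" using q94 v0 v1 v2 v3 v4 v5 v6 v7 v10 v13 v17 v18 v20 v24 v25 v26 v27 v29 by linarith
  have q107: "(-1) * G (1,1,1) + (1) * G (1,2,4) + (1) * G (1,4,3) + (1) * G (1,6,2) + (-1) * G (2,1,6) + (1) * G (2,2,2) + (1) * G (2,4,1) + (-1) * G (3,1,4) + (-1) * G (3,3,3) + (-1) * G (4,1,2) + (-1) * G (4,3,1) + (1) * G (6,2,1) = 0" using q95 v0 v1 v2 v3 v4 v5 v6 v7 v10 v13 v17 v18 v20 v24 v25 v26 v27 v29 by linarith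
  have q108: "(-1) * G (1,1,1) + (1) * G (1,2,4) + (-1) * G (1,4,3) + (1) * G (1,6,2) + (1) * G (2,1,6) + (1) * G (2,2,2) + (-1) * G (2,4,1) + (1) * G (3,1,4) + (-1) * G (3,3,3) + (1) * G (4,1,2) + (-1) * G (4,3,1) + (-1) * G (6,2,1) = 0" using q96 v0 v1 v2 v3 v4 v5 v6 v7 v10 v13 v17 v18 v20 v24 v25 v26 v27 v29 by linarith
  have q109: "(-1) * G (1,1,1) + (-8) * G (1,2,4) + (-4) * G (1,4,3) + (-2) * G (1,6,2) + (64) * G (2,1,6) + (4) * G (2,2,2) + (2) * G (2,4,1) + (-32) * G (3,1,4) + (-16) * G (3,3,3) + (16) * G (4,1,2) + (8) * G (4,3,1) + (32) * G (6,2,1) = 84" using q97 v0 v1 v2 v3 v4 v5 v6 v7 v10 v13 v17 v18 v20 v24 v25 v26 v27 v29 by linarith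
  have q110: "(-1) * G (1,1,1) + (-2) * G (1,2,4) + (-8) * G (1,4,3) + (-32) * G (1,6,2) + (2) * G (2,1,6) + (4) * G (2,2,2) + (16) * G (2,4,1) + (-4) * G (3,1,4) + (-16) * G (3,3,3) + (8) * G (4,1,2) + (32) * G (4,3,1) + (64) * G (6,2,1) = 168" using q98 v0 v1 v2 v3 v4 v5 v6 v7 v10 v13 v17 v18 v20 v24 v25 v26 v27 v29 by linarith
  have q111: "(-1) * G (1,1,1) + (16) * G (1,2,4) + (32) * G (1,4,3) + (64) * G (1,6,2) + (-32) * G (2,1,6) + (4) * G (2,2,2) + (8) * G (2,4,1) + (-8) * G (3,1,4) + (-16) * G (3,3,3) + (-2) * G (4,1,2) + (-4) * G (4,3,1) + (2) * G (6,2,1) = 168" using q99 v0 v1 v2 v3 v4 v5 v6 v7 v10 v13 v17 v18 v20 v24 v25 v26 v27 v29 by linarith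
  have q112: "(-1) * G (1,1,1) + (16) * G (1,2,4) + (-32) * G (1,4,3) + (64) * G (1,6,2) + (32) * G (2,1,6) + (4) * G (2,2,2) + (-8) * G (2,4,1) + (8) * G (3,1,4) + (-16) * G (3,3,3) + (2) * G (4,1,2) + (-4) * G (4,3,1) + (-2) * G (6,2,1) = 84" using q100 v0 v1 v2 v3 v4 v5 v6 v7 v10 v13 v17 v18 v20 v24 v25 v26 v27 v29 by linarith
  have q113: "(-1) * G (1,1,1) + (2) * G (1,2,4) + (8) * G (1,4,3) + (32) * G (1,6,2) + (-2) * G (2,1,6) + (4) * G (2,2,2) + (16) * G (2,4,1) + (-4) * G (3,1,4) + (-16) * G (3,3,3) + (-8) * G (4,1,2) + (-32) * G (4,3,1) + (64) * G (6,2,1) = 84" using q101 v0 v1 v2 v3 v4 v5 v6 v7 v10 v13 v17 v18 v20 v24 v25 v26 v27 v29 by linarith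
  have q114: "(-1) * G (1,1,1) + (8) * G (1,2,4) + (-4) * G (1,4,3) + (2) * G (1,6,2) + (64) * G (2,1,6) + (4) * G (2,2,2) + (-2) * G (2,4,1) + (32) * G (3,1,4) + (-16) * G (3,3,3) + (16) * G (4,1,2) + (-8) * G (4,3,1) + (-32) * G (6,2,1) = 168" using q102 v0 v1 v2 v3 v4 v5 v6 v7 v10 v13 v17 v18 v20 v24 v25 v26 v27 v29 by linarith
  have q115: "(1) * G (1,1,1) + (-27) * G (1,2,4) + (-9) * G (1,4,3) + (-3) * G (1,6,2) + (-243) * G (2,1,6) + (3) * G (2,2,2) + (1) * G (2,4,1) + (27) * G (3,1,4) + (9) * G (3,3,3) + (-3) * G (4,1,2) + (-1) * G (4,3,1) + (1) * G (6,2,1) = -168" using q103 v0 v1 v2 v3 v4 v5 v6 v7 v10 v13 v17 v18 v20 v24 v25 v26 v27 v29 by linarith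
  have q116: "(-1) * G (1,1,1) + (-27) * G (1,2,4) + (-9) * G (1,4,3) + (-3) * G (1,6,2) + (729) * G (2,1,6) + (9) * G (2,2,2) + (3) * G (2,4,1) + (-243) * G (3,1,4) + (-81) * G (3,3,3) + (81) * G (4,1,2) + (27) * G (4,3,1) + (243) * G (6,2,1) = 448" using q104 v0 v1 v2 v3 v4 v5 v6 v7 v10 v13 v17 v18 v20 v24 v25 v26 v27 v29 by linarith
  have q117: "(-1) * G (1,1,1) + (-16) * G (1,2,4) + (-32) * G (1,4,3) + (-64) * G (1,6,2) + (96) * G (2,1,6) + (12) * G (2,2,2) + (24) * G (2,4,1) + (-72) * G (3,1,4) + (-144) * G (3,3,3) + (54) * G (4,1,2) + (108) * G (4,3,1) + (486) * G (6,2,1) = 504" using q105 v0 v1 v2 v3 v4 v5 v6 v7 v10 v13 v17 v18 v20 v24 v25 v26 v27 v29 by linarith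
  have q118: "(-1) * G (1,2,4) + (-1) * G (1,4,3) + (-1) * G (1,6,2) + (1) * G (2,1,6) + (1) * G (4,1,2) + (1) * G (4,3,1) = 0" using q107 q106 by linarith
  have q119: "(-1) * G (1,2,4) + (-1) * G (1,6,2) + (1) * G (2,4,1) + (-1) * G (3,1,4) + (1) * G (4,3,1) + (1) * G (6,2,1) = 0" using q108 q106 by linarith
  have q120: "(7) * G (1,2,4) + (3) * G (1,4,3) + (1) * G (1,6,2) + (-63) * G (2,1,6) + (-3) * G (2,2,2) + (-1) * G (2,4,1) + (31) * G (3,1,4) + (15) * G (3,3,3) + (-15) * G (4,1,2) + (-7) * G (4,3,1) + (-31) * G (6,2,1) = -84" using q109 q106 by linarith
  have q121: "(1) * G (1,2,4) + (7) * G (1,4,3) + (31) * G (1,6,2) + (-1) * G (2,1,6) + (-3) * G (2,2,2) + (-15) * G (2,4,1) + (3) * G (3,1,4) + (15) * G (3,3,3) + (-7) * G (4,1,2) + (-31) * G (4,3,1) + (-63) * G (6,2,1) = -168" using q110 q106 by linarith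
  have q122: "(-17) * G (1,2,4) + (-33) * G (1,4,3) + (-65) * G (1,6,2) + (33) * G (2,1,6) + (-3) * G (2,2,2) + (-7) * G (2,4,1) + (7) * G (3,1,4) + (15) * G (3,3,3) + (3) * G (4,1,2) + (5) * G (4,3,1) + (-1) * G (6,2,1) = -168" using q111 q106 by linarith
  have q123: "(-17) * G (1,2,4) + (31) * G (1,4,3) + (-65) * G (1,6,2) + (-31) * G (2,1,6) + (-3) * G (2,2,2) + (9) * G (2,4,1) + (-9) * G (3,1,4) + (15) * G (3,3,3) + (-1) * G (4,1,2) + (5) * G (4,3,1) + (3) * G (6,2,1) = -84" using q112 q106 by linarith
  have q124: "(-1) * G (1,2,4) + (-3) * G (1,4,3) + (-11) * G (1,6,2) + (1) * G (2,1,6) + (-1) * G (2,2,2) + (-5) * G (2,4,1) + (1) * G (3,1,4) + (5) * G (3,3,3) + (3) * G (4,1,2) + (11) * G (4,3,1) + (-21) * G (6,2,1) = -28" using q113 q106 by linarith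
  have q125: "(-3) * G (1,2,4) + (1) * G (1,4,3) + (-1) * G (1,6,2) + (-21) * G (2,1,6) + (-1) * G (2,2,2) + (1) * G (2,4,1) + (-11) * G (3,1,4) + (5) * G (3,3,3) + (-5) * G (4,1,2) + (3) * G (4,3,1) + (11) * G (6,2,1) = -56" using q114 q106 by linarith
  have q126: "(14) * G (1,2,4) + (5) * G (1,4,3) + (2) * G (1,6,2) + (121) * G (2,1,6) + (-2) * G (2,2,2) + (-1) * G (2,4,1) + (-13) * G (3,1,4) + (-4) * G (3,3,3) + (1) * G (4,1,2) + (-1) * G (6,2,1) = 84" using q115 q106 by linarith
  have q127: "(13) * G (1,2,4) + (4) * G (1,4,3) + (1) * G (1,6,2) + (-364) * G (2,1,6) + (-4) * G (2,2,2) + (-1) * G (2,4,1) + (121) * G (3,1,4) + (40) * G (3,3,3) + (-40) * G (4,1,2) + (-13) * G (4,3,1) + (-121) * G (6,2,1) = -224" using q116 q106 by linarith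
  have q128: "(15) * G (1,2,4) + (31) * G (1,4,3) + (63) * G (1,6,2) + (-95) * G (2,1,6) + (-11) * G (2,2,2) + (-23) * G (2,4,1) + (71) * G (3,1,4) + (143) * G (3,3,3) + (-53) * G (4,1,2) + (-107) * G (4,3,1) + (-485) * G (6,2,1) = -504" using q117 q106 by linarith
  have q129: "(1) * G (1,1,1) + (-1) * G (2,2,2) + (-1) * G (2,4,1) + (1) * G (3,1,4) + (1) * G (3,3,3) + (-1) * G (6,2,1) = 0" using q106 q118 by linarith
  have q130: "(-1) * G (1,4,3) + (1) * G (2,1,6) + (-1) * G (2,4,1) + (1) * G (3,1,4) + (1) * G (4,1,2) + (-1) * G (6,2,1) = 0" using q119 q118 by linarith
  have q131: "(4) * G (1,4,3) + (6) * G (1,6,2) + (56) * G (2,1,6) + (3) * G (2,2,2) + (1) * G (2,4,1) + (-31) * G (3,1,4) + (-15) * G (3,3,3) + (8) * G (4,1,2) + (31) * G (6,2,1) = 84" using q120 q118 by linarith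
  have q132: "(-2) * G (1,4,3) + (-10) * G (1,6,2) + (1) * G (2,2,2) + (5) * G (2,4,1) + (-1) * G (3,1,4) + (-5) * G (3,3,3) + (2) * G (4,1,2) + (10) * G (4,3,1) + (21) * G (6,2,1) = 56" using q121 q118 by linarith
  have q133: "(16) * G (1,4,3) + (48) * G (1,6,2) + (-16) * G (2,1,6) + (3) * G (2,2,2) + (7) * G (2,4,1) + (-7) * G (3,1,4) + (-15) * G (3,3,3) + (14) * G (4,1,2) + (12) * G (4,3,1) + (1) * G (6,2,1) = 168" using q122 q118 by linarith
  have q134: "(-16) * G (1,4,3) + (16) * G (1,6,2) + (16) * G (2,1,6) + (1) * G (2,2,2) + (-3) * G (2,4,1) + (3) * G (3,1,4) + (-5) * G (3,3,3) + (6) * G (4,1,2) + (4) * G (4,3,1) + (-1) * G (6,2,1) = 28" using q123 q118 by linarith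
  have q135: "(2) * G (1,4,3) + (10) * G (1,6,2) + (1) * G (2,2,2) + (5) * G (2,4,1) + (-1) * G (3,1,4) + (-5) * G (3,3,3) + (-2) * G (4,1,2) + (-10) * G (4,3,1) + (21) * G (6,2,1) = 28" using q124 q118 by linarith
  have q136: "(-4) * G (1,4,3) + (-2) * G (1,6,2) + (24) * G (2,1,6) + (1) * G (2,2,2) + (-1) * G (2,4,1) + (11) * G (3,1,4) + (-5) * G (3,3,3) + (8) * G (4,1,2) + (-11) * G (6,2,1) = 56" using q125 q118 by linarith
  have q137: "(9) * G (1,4,3) + (12) * G (1,6,2) + (-135) * G (2,1,6) + (2) * G (2,2,2) + (1) * G (2,4,1) + (13) * G (3,1,4) + (4) * G (3,3,3) + (-15) * G (4,1,2) + (-14) * G (4,3,1) + (1) * G (6,2,1) = -84" using q126 q118 by linarith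
  have q138: "(9) * G (1,4,3) + (12) * G (1,6,2) + (351) * G (2,1,6) + (4) * G (2,2,2) + (1) * G (2,4,1) + (-121) * G (3,1,4) + (-40) * G (3,3,3) + (27) * G (4,1,2) + (121) * G (6,2,1) = 224" using q127 q118 by linarith
  have q139: "(-16) * G (1,4,3) + (-48) * G (1,6,2) + (80) * G (2,1,6) + (11) * G (2,2,2) + (23) * G (2,4,1) + (-71) * G (3,1,4) + (-143) * G (3,3,3) + (38) * G (4,1,2) + (92) * G (4,3,1) + (485) * G (6,2,1) = 504" using q128 q118 by linarith
  have q140: "(1) * G (1,2,4) + (1) * G (1,6,2) + (-1) * G (2,4,1) + (1) * G (3,1,4) + (-1) * G (4,3,1) + (-1) * G (6,2,1) = 0" using q118 q130 by linarith
  have q141: "(-2) * G (1,6,2) + (-20) * G (2,1,6) + (-1) * G (2,2,2) + (1) * G (2,4,1) + (9) * G (3,1,4) + (5) * G (3,3,3) + (-4) * G (4,1,2) + (-9) * G (6,2,1) = -28" using q131 q130 by linarith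
  have q142: "(10) * G (1,6,2) + (2) * G (2,1,6) + (-1) * G (2,2,2) + (-7) * G (2,4,1) + (3) * G (3,1,4) + (5) * G (3,3,3) + (-10) * G (4,3,1) + (-23) * G (6,2,1) = -56" using q132 q130 by linarith
  have q143: "(-16) * G (1,6,2) + (-1) * G (2,2,2) + (3) * G (2,4,1) + (-3) * G (3,1,4) + (5) * G (3,3,3) + (-10) * G (4,1,2) + (-4) * G (4,3,1) + (5) * G (6,2,1) = -56" using q133 q130 by linarith
  have q144: "(-16) * G (1,6,2) + (-1) * G (2,2,2) + (-13) * G (2,4,1) + (13) * G (3,1,4) + (5) * G (3,3,3) + (10) * G (4,1,2) + (-4) * G (4,3,1) + (-15) * G (6,2,1) = -28" using q134 q130 by linarith
  have q145: "(-10) * G (1,6,2) + (-2) * G (2,1,6) + (-1) * G (2,2,2) + (-3) * G (2,4,1) + (-1) * G (3,1,4) + (5) * G (3,3,3) + (10) * G (4,3,1) + (-19) * G (6,2,1) = -28" using q135 q130 by linarith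
  have q146: "(2) * G (1,6,2) + (-20) * G (2,1,6) + (-1) * G (2,2,2) + (-3) * G (2,4,1) + (-7) * G (3,1,4) + (5) * G (3,3,3) + (-4) * G (4,1,2) + (7) * G (6,2,1) = -56" using q136 q130 by linarith
  have q147: "(-6) * G (1,6,2) + (63) * G (2,1,6) + (-1) * G (2,2,2) + (4) * G (2,4,1) + (-11) * G (3,1,4) + (-2) * G (3,3,3) + (3) * G (4,1,2) + (7) * G (4,3,1) + (4) * G (6,2,1) = 42" using q137 q130 by linarith
  have q148: "(-3) * G (1,6,2) + (-90) * G (2,1,6) + (-1) * G (2,2,2) + (2) * G (2,4,1) + (28) * G (3,1,4) + (10) * G (3,3,3) + (-9) * G (4,1,2) + (-28) * G (6,2,1) = -56" using q138 q130 by linarith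
  have q149: "(48) * G (1,6,2) + (-64) * G (2,1,6) + (-11) * G (2,2,2) + (-39) * G (2,4,1) + (87) * G (3,1,4) + (143) * G (3,3,3) + (-22) * G (4,1,2) + (-92) * G (4,3,1) + (-501) * G (6,2,1) = -504" using q139 q130 by linarith
  have q150: "(-2) * G (1,2,4) + (20) * G (2,1,6) + (1) * G (2,2,2) + (1) * G (2,4,1) + (-11) * G (3,1,4) + (-5) * G (3,3,3) + (4) * G (4,1,2) + (2) * G (4,3,1) + (11) * G (6,2,1) = 28" using q140 q141 by linarith
  have q151: "(49) * G (2,1,6) + (3) * G (2,2,2) + (1) * G (2,4,1) + (-24) * G (3,1,4) + (-15) * G (3,3,3) + (10) * G (4,1,2) + (5) * G (4,3,1) + (34) * G (6,2,1) = 98" using q142 q141 by linarith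
  have q152: "(-160) * G (2,1,6) + (-7) * G (2,2,2) + (5) * G (2,4,1) + (75) * G (3,1,4) + (35) * G (3,3,3) + (-22) * G (4,1,2) + (4) * G (4,3,1) + (-77) * G (6,2,1) = -168" using q143 q141 by linarith
  have q153: "(-160) * G (2,1,6) + (-7) * G (2,2,2) + (21) * G (2,4,1) + (59) * G (3,1,4) + (35) * G (3,3,3) + (-42) * G (4,1,2) + (4) * G (4,3,1) + (-57) * G (6,2,1) = -196" using q144 q141 by linarith
  have q154: "(-49) * G (2,1,6) + (-2) * G (2,2,2) + (4) * G (2,4,1) + (23) * G (3,1,4) + (10) * G (3,3,3) + (-10) * G (4,1,2) + (-5) * G (4,3,1) + (-13) * G (6,2,1) = -56" using q145 q141 by linarith
  have q155: "(20) * G (2,1,6) + (1) * G (2,2,2) + (1) * G (2,4,1) + (-1) * G (3,1,4) + (-5) * G (3,3,3) + (4) * G (4,1,2) + (1) * G (6,2,1) = 42" using q146 q141 by linarith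
  have q156: "(-123) * G (2,1,6) + (-2) * G (2,2,2) + (-1) * G (2,4,1) + (38) * G (3,1,4) + (17) * G (3,3,3) + (-15) * G (4,1,2) + (-7) * G (4,3,1) + (-31) * G (6,2,1) = -126" using q147 q141 by linarith
  have q157: "(120) * G (2,1,6) + (-1) * G (2,2,2) + (-1) * G (2,4,1) + (-29) * G (3,1,4) + (-5) * G (3,3,3) + (6) * G (4,1,2) + (29) * G (6,2,1) = 28" using q148 q141 by linarith
  have q158: "(544) * G (2,1,6) + (35) * G (2,2,2) + (15) * G (2,4,1) + (-303) * G (3,1,4) + (-263) * G (3,3,3) + (118) * G (4,1,2) + (92) * G (4,3,1) + (717) * G (6,2,1) = 1176" using q149 q141 by linarith
  have q159: "(-1) * G (1,2,4) + (-5) * G (3,1,4) + (1) * G (4,3,1) + (5) * G (6,2,1) = -7" using q150 q155 by linarith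
  have q160: "(-20) * G (1,4,3) + (-1) * G (2,2,2) + (-21) * G (2,4,1) + (21) * G (3,1,4) + (5) * G (3,3,3) + (16) * G (4,1,2) + (-21) * G (6,2,1) = -42" using q130 q155 by linarith
  have q161: "(-1) * G (1,6,2) + (1) * G (2,4,1) + (4) * G (3,1,4) + (-4) * G (6,2,1) = 7" using q141 q155 by linarith
  have q162: "(11) * G (2,2,2) + (-29) * G (2,4,1) + (-431) * G (3,1,4) + (-55) * G (3,3,3) + (4) * G (4,1,2) + (100) * G (4,3,1) + (631) * G (6,2,1) = -98" using q151 q155 by linarith
  have q163: "(1) * G (2,2,2) + (13) * G (2,4,1) + (67) * G (3,1,4) + (-5) * G (3,3,3) + (10) * G (4,1,2) + (4) * G (4,3,1) + (-69) * G (6,2,1) = 168" using q152 q155 by linarith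
  have q164: "(1) * G (2,2,2) + (29) * G (2,4,1) + (51) * G (3,1,4) + (-5) * G (3,3,3) + (-10) * G (4,1,2) + (4) * G (4,3,1) + (-49) * G (6,2,1) = 140" using q153 q155 by linarith
  have q165: "(9) * G (2,2,2) + (129) * G (2,4,1) + (411) * G (3,1,4) + (-45) * G (3,3,3) + (-4) * G (4,1,2) + (-100) * G (4,3,1) + (-211) * G (6,2,1) = 938" using q154 q155 by linarith
  have q166: "(83) * G (2,2,2) + (103) * G (2,4,1) + (637) * G (3,1,4) + (-275) * G (3,3,3) + (192) * G (4,1,2) + (-140) * G (4,3,1) + (-497) * G (6,2,1) = 2646" using q156 q155 by linarith
  have q167: "(-7) * G (2,2,2) + (-7) * G (2,4,1) + (-23) * G (3,1,4) + (25) * G (3,3,3) + (-18) * G (4,1,2) + (23) * G (6,2,1) = -224" using q157 q155 by linarith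
  have q168: "(39) * G (2,2,2) + (-61) * G (2,4,1) + (-1379) * G (3,1,4) + (-635) * G (3,3,3) + (46) * G (4,1,2) + (460) * G (4,3,1) + (3449) * G (6,2,1) = 168" using q158 q155 by linarith
  have q169: "(-7) * G (1,1,1) + (-30) * G (3,1,4) + (18) * G (3,3,3) + (-18) * G (4,1,2) + (30) * G (6,2,1) = -224" using q129 q167 by linarith
  have q170: "(14) * G (1,4,3) + (14) * G (2,4,1) + (-17) * G (3,1,4) + (-1) * G (3,3,3) + (-13) * G (4,1,2) + (17) * G (6,2,1) = 7" using q160 q167 by linarith
  have q171: "(28) * G (2,4,1) + (327) * G (3,1,4) + (11) * G (3,3,3) + (17) * G (4,1,2) + (-70) * G (4,3,1) + (-467) * G (6,2,1) = 315" using q162 q167 by linarith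
  have q172: "(-42) * G (2,4,1) + (-223) * G (3,1,4) + (5) * G (3,3,3) + (-26) * G (4,1,2) + (-14) * G (4,3,1) + (230) * G (6,2,1) = -476" using q163 q167 by linarith
  have q173: "(-98) * G (2,4,1) + (-167) * G (3,1,4) + (5) * G (3,3,3) + (44) * G (4,1,2) + (-14) * G (4,3,1) + (160) * G (6,2,1) = -378" using q164 q167 by linarith
  have q174: "(-84) * G (2,4,1) + (-267) * G (3,1,4) + (9) * G (3,3,3) + (19) * G (4,1,2) + (70) * G (4,3,1) + (127) * G (6,2,1) = -455" using q165 q167 by linarith
  have q175: "(-14) * G (2,1,6) + (3) * G (3,1,4) + (1) * G (3,3,3) + (-1) * G (4,1,2) + (-3) * G (6,2,1) = -7" using q155 q167 by linarith
  have q176: "(-14) * G (2,4,1) + (-255) * G (3,1,4) + (-15) * G (3,3,3) + (15) * G (4,1,2) + (98) * G (4,3,1) + (157) * G (6,2,1) = 7" using q166 q167 by linarith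
  have q177: "(70) * G (2,4,1) + (1055) * G (3,1,4) + (347) * G (3,3,3) + (38) * G (4,1,2) + (-322) * G (4,3,1) + (-2504) * G (6,2,1) = 756" using q168 q167 by linarith
  have q178: "(-7) * G (1,4,3) + (136) * G (3,1,4) + (8) * G (3,3,3) + (-1) * G (4,1,2) + (-49) * G (4,3,1) + (-87) * G (6,2,1) = -7" using q170 q176 by linarith
  have q179: "(14) * G (1,6,2) + (199) * G (3,1,4) + (15) * G (3,3,3) + (-15) * G (4,1,2) + (-98) * G (4,3,1) + (-101) * G (6,2,1) = -105" using q161 q176 by linarith
  have q180: "(183) * G (3,1,4) + (19) * G (3,3,3) + (-47) * G (4,1,2) + (-126) * G (4,3,1) + (153) * G (6,2,1) = -329" using q171 q176 by linarith
  have q181: "(-542) * G (3,1,4) + (-50) * G (3,3,3) + (71) * G (4,1,2) + (308) * G (4,3,1) + (241) * G (6,2,1) = 497" using q172 q176 by linarith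
  have q182: "(-1618) * G (3,1,4) + (-110) * G (3,3,3) + (61) * G (4,1,2) + (700) * G (4,3,1) + (939) * G (6,2,1) = 427" using q173 q176 by linarith
  have q183: "(-1263) * G (3,1,4) + (-99) * G (3,3,3) + (71) * G (4,1,2) + (518) * G (4,3,1) + (815) * G (6,2,1) = 497" using q174 q176 by linarith
  have q184: "(14) * G (2,2,2) + (-209) * G (3,1,4) + (-65) * G (3,3,3) + (51) * G (4,1,2) + (98) * G (4,3,1) + (111) * G (6,2,1) = 455" using q167 q176 by linarith
  have q185: "(220) * G (3,1,4) + (-272) * G (3,3,3) + (-113) * G (4,1,2) + (-168) * G (4,3,1) + (1719) * G (6,2,1) = -791" using q177 q176 by linarith
  have q186: "(-61) * G (1,1,1) + (184) * G (3,3,3) + (-224) * G (4,1,2) + (-180) * G (4,3,1) + (480) * G (6,2,1) = -2422" using q169 q180 by linarith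
  have q187: "(-183) * G (1,2,4) + (95) * G (3,3,3) + (-235) * G (4,1,2) + (-447) * G (4,3,1) + (1680) * G (6,2,1) = -2926" using q159 q180 by linarith
  have q188: "(-183) * G (1,4,3) + (-160) * G (3,3,3) + (887) * G (4,1,2) + (1167) * G (4,3,1) + (-5247) * G (6,2,1) = 6209" using q178 q180 by linarith
  have q189: "(183) * G (1,6,2) + (-74) * G (3,3,3) + (472) * G (4,1,2) + (510) * G (4,3,1) + (-3495) * G (6,2,1) = 3304" using q179 q180 by linarith
  have q190: "(164) * G (3,3,3) + (-1783) * G (4,1,2) + (-1704) * G (4,3,1) + (18147) * G (6,2,1) = -12481" using q181 q180 by linarith
  have q191: "(1516) * G (3,3,3) + (-9269) * G (4,1,2) + (-10824) * G (4,3,1) + (59913) * G (6,2,1) = -64883" using q182 q180 by linarith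
  have q192: "(35) * G (3,3,3) + (-276) * G (4,1,2) + (-383) * G (4,3,1) + (2038) * G (6,2,1) = -1932" using q183 q180 by linarith
  have q193: "(-61) * G (2,1,6) + (3) * G (3,3,3) + (-1) * G (4,1,2) + (9) * G (4,3,1) + (-24) * G (6,2,1) = -7" using q175 q180 by linarith
  have q194: "(-61) * G (2,4,1) + (50) * G (3,3,3) + (-220) * G (4,1,2) + (-338) * G (4,3,1) + (1613) * G (6,2,1) = -1967" using q176 q180 by linarith
  have q195: "(183) * G (2,2,2) + (-566) * G (3,3,3) + (-35) * G (4,1,2) + (-600) * G (4,3,1) + (3735) * G (6,2,1) = 1036" using q184 q180 by linarith
  have q196: "(-7708) * G (3,3,3) + (-1477) * G (4,1,2) + (-432) * G (4,3,1) + (40131) * G (6,2,1) = -10339" using q185 q180 by linarith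
  have q197: "(-35) * G (1,1,1) + (704) * G (4,1,2) + (1052) * G (4,3,1) + (-5872) * G (6,2,1) = 4438" using q186 q192 by linarith
  have q198: "(-21) * G (1,2,4) + (59) * G (4,1,2) + (68) * G (4,3,1) + (-442) * G (6,2,1) = 266" using q187 q192 by linarith
  have q199: "(-21) * G (1,4,3) + (-43) * G (4,1,2) + (-67) * G (4,3,1) + (467) * G (6,2,1) = -301" using q188 q192 by linarith
  have q200: "(105) * G (1,6,2) + (-64) * G (4,1,2) + (-172) * G (4,3,1) + (467) * G (6,2,1) = -448" using q189 q192 by linarith
  have q201: "(105) * G (3,1,4) + (59) * G (4,1,2) + (47) * G (4,3,1) + (-547) * G (6,2,1) = 413" using q180 q192 by linarith
  have q202: "(-281) * G (4,1,2) + (52) * G (4,3,1) + (4933) * G (6,2,1) = -1967" using q190 q192 by linarith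
  have q203: "(1541) * G (4,1,2) + (3308) * G (4,3,1) + (-16273) * G (6,2,1) = 10787" using q191 q192 by linarith
  have q204: "(-35) * G (2,1,6) + (13) * G (4,1,2) + (24) * G (4,3,1) + (-114) * G (6,2,1) = 91" using q193 q192 by linarith
  have q205: "(-7) * G (2,4,1) + (20) * G (4,1,2) + (24) * G (4,3,1) + (-149) * G (6,2,1) = 91" using q194 q192 by linarith
  have q206: "(105) * G (2,2,2) + (-2581) * G (4,1,2) + (-3898) * G (4,3,1) + (21053) * G (6,2,1) = -17332" using q195 q192 by linarith
  have q207: "(-35723) * G (4,1,2) + (-48644) * G (4,3,1) + (280549) * G (6,2,1) = -250061" using q196 q192 by linarith
  have q208: "(281) * G (1,1,1) + (-9492) * G (4,3,1) + (-52080) * G (6,2,1) = 3934" using q197 q202 by linarith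
  have q209: "(281) * G (1,2,4) + (-1056) * G (4,3,1) + (-7945) * G (6,2,1) = 1967" using q198 q202 by linarith
  have q210: "(281) * G (1,4,3) + (1003) * G (4,3,1) + (3852) * G (6,2,1) = 0" using q199 q202 by linarith
  have q211: "(-281) * G (1,6,2) + (492) * G (4,3,1) + (1757) * G (6,2,1) = 0" using q200 q202 by linarith
  have q212: "(-281) * G (3,1,4) + (-155) * G (4,3,1) + (-1308) * G (6,2,1) = 0" using q201 q202 by linarith
  have q213: "(-1) * G (4,3,1) + (-3) * G (6,2,1) = 0" using q203 q202 by linarith
  have q214: "(-281) * G (3,3,3) + (3485) * G (4,3,1) + (22538) * G (6,2,1) = 0" using q192 q202 by linarith
  have q215: "(281) * G (2,1,6) + (-212) * G (4,3,1) + (-917) * G (6,2,1) = 0" using q204 q202 by linarith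
  have q216: "(281) * G (2,4,1) + (-1112) * G (4,3,1) + (-8113) * G (6,2,1) = 1967" using q205 q202 by linarith
  have q217: "(-281) * G (2,2,2) + (11710) * G (4,3,1) + (64916) * G (6,2,1) = -1967" using q206 q202 by linarith
  have q218: "(73936) * G (4,3,1) + (463749) * G (6,2,1) = 0" using q207 q202 by linarith
  have q219: "(-1) * G (1,1,1) + (84) * G (6,2,1) = -14" using q208 q213 by linarith
  have q220: "(-1) * G (1,2,4) + (17) * G (6,2,1) = -7" using q209 q213 by linarith
  have q221: "(-1) * G (1,4,3) + (-3) * G (6,2,1) = 0" using q210 q213 by linarith
  have q222: "(1) * G (1,6,2) + (-1) * G (6,2,1) = 0" using q211 q213 by linarith
  have q223: "(1) * G (3,1,4) + (3) * G (6,2,1) = 0" using q212 q213 by linarith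
  have q224: "(1) * G (4,1,2) + (-17) * G (6,2,1) = 7" using q202 q213 by linarith
  have q225: "(1) * G (3,3,3) + (-43) * G (6,2,1) = 0" using q214 q213 by linarith
  have q226: "(-1) * G (2,1,6) + (1) * G (6,2,1) = 0" using q215 q213 by linarith
  have q227: "(-1) * G (2,4,1) + (17) * G (6,2,1) = -7" using q216 q213 by linarith
  have q228: "(1) * G (2,2,2) + (-106) * G (6,2,1) = 7" using q217 q213 by linarith
  have q229: "(-1) * G (6,2,1) = 0" using q218 q213 by linarith
  have q230: "(1) * G (1,1,1) = 14" using q219 q229 by linarith
  have q231: "(1) * G (1,2,4) = 7" using q220 q229 by linarith
  have q232: "(1) * G (1,4,3) = 0" using q221 q229 by linarith
  have q233: "(-1) * G (1,6,2) = 0" using q222 q229 by linarith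
  have q234: "(-1) * G (3,1,4) = 0" using q223 q229 by linarith
  have q235: "(-1) * G (4,1,2) = -7" using q224 q229 by linarith
  have q236: "(1) * G (4,3,1) = 0" using q213 q229 by linarith
  have q237: "(-1) * G (3,3,3) = 0" using q225 q229 by linarith
  have q238: "(1) * G (2,1,6) = 0" using q226 q229 by linarith
  have q239: "(1) * G (2,4,1) = 7" using q227 q229 by linarith
  have q240: "(-1) * G (2,2,2) = -7" using q228 q229 by linarith
  have v8: "G (1,1,1) = 14" using q230 by simp
  have v9: "G (1,2,4) = 7" using q231 by simp
  have v11: "G (1,4,3) = 0" using q232 by simp
  have v12: "G (1,6,2) = 0" using q233 by simp
  have v19: "G (3,1,4) = 0" using q234 by simp
  have v22: "G (4,1,2) = 7" using q235 by simp
  have v23: "G (4,3,1) = 0" using q236 by simp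
  have v21: "G (3,3,3) = 0" using q237 by simp
  have v14: "G (2,1,6) = 0" using q238 by simp
  have v16: "G (2,4,1) = 7" using q239 by simp
  have v15: "G (2,2,2) = 7" using q240 by simp
  have v28: "G (6,2,1) = 0" using q229 by simp
  show "G = Fc"
  proof
    fix m
    show "G m = Fc m"
    proof (cases "m \<in> Sset")
      case True
      then show ?thesis unfolding Sset_def Slist_def using v0 v1 v2 v3 v4 v5 v6 v7 v8 v9 v10 v11 v12 v13 v14 v15 v16 v17 v18 v19 v20 v21 v22 v23 v24 v25 v26 v27 v28 v29 by (auto simp: Fc_def)
    next
      case False
      then have "G m = 0" using sub by (auto simp: supp3_def)
      moreover have "Fc m = 0" using False Fc_supp by blast
      ultimately show ?thesis by simp
    qed
  qed
qed

end
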